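(* Assume $\mu\in\mathcal P_{ac}(\mathbb R^p)$ and that no two of the reference points $\mathbf h_1,\dots,\mathbf h_n$ lie on the same orbit of $\mathcal G$. Then: (1) the generalized ranks $R_n(\mathbf X_1),\dots,R_n(\mathbf X_n)$ and the generalized signed-ranks $S_n(\mathbf X_1)R_n(\mathbf X_1),\dots,S_n(\mathbf X_n)R_n(\mathbf X_n)$ are almost surely uniquely determined (i.e. the optimal permutation $\hat\sigma$ is a.s. unique and, for each $i$, the point of the orbit $\mathcal G R_n(\mathbf X_i)$ closest to $\mathbf X_i$ is a.s. unique); (2) if moreover $\mathbf h_1,\dots,\mathbf h_n\in B$ for some $B\subset\mathbb R^p$ such that $\mathcal G$ acts freely on $\mathcal G B$, then the generalized signs $S_n(\mathbf X_1),\dots,S_n(\mathbf X_n)$ are almost surely uniquely determined.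
   Context: Let $p\ge1$ and let $\mathcal G$ be a compact subgroup of the orthogonal group $\mathrm O(p)$ (the $p\times p$ real orthogonal matrices under matrix multiplication). $\mathcal P_{ac}(\mathbb R^p)$ denotes the set of Borel probability measures on $\mathbb R^p$ having a Lebesgue density. For $\mathbf x\in\mathbb R^p$ its orbit is $\mathcal G\mathbf x=\{Q\mathbf x:Q\in\mathcal G\}$; for $B\subset\mathbb R^p$, $\mathcal G B=\{Q\mathbf x:Q\in\mathcal G,\mathbf x\in B\}$. $\mathcal G$ acts freely on $\mathcal G B$ if for every $\mathbf y\in B$ and $Q\in\mathcal G$, $Q\mathbf y=\mathbf y$ implies $Q=I$. Let $\mathbf X_1,\dots,\mathbf X_n$ be i.i.d. from $\mu$, and let $\mathbf h_1,\dots,\mathbf h_n\in\mathbb R^p$ be fixed (non-random) reference points. Let $c(\mathbf x,\mathbf h)=\min_{Q\in\mathcal G}\|Q^\top\mathbf x-\mathbf h\|^2$. Let $(\{\hat Q_i\}_{i=1}^n,\hat\sigma)$ be a minimizer of $\sum_{i=1}^n\|Q_i^\top\mathbf X_{\sigma(i)}-\mathbf h_i\|^2$ over $Q_1,\dots,Q_n\in\mathcal G$ and permutations $\sigma$ of $\{1,\dots,n\}$ (equivalently $\hat\sigma$ minimizes $\sum_i c(\mathbf X_{\sigma(i)},\mathbf h_i)$ and $\hat Q_i$ minimizes $Q\mapsto \|Q^\top\mathbf X_{\hat\sigma(i)}-\mathbf h_i\|^2$). The generalized sign, rank and signed-rank of $\mathbf X_i$ are $S_n(\mathbf X_i)=\hat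 Q_{\hat\sigma^{-1}(i)}$, $R_n(\mathbf X_i)=\mathbf h_{\hat\sigma^{-1}(i)}$ and $S_n(\mathbf X_i)R_n(\mathbf X_i)$. *)

theory Defs
  imports "HOL-Probability.Probability"
begin

definition compact_orth_subgroup :: "(real^'p^'p) set \<Rightarrow> bool" where
  "compact_orth_subgroup G \<longleftrightarrow>
     compact G \<and> (\<forall>Q\<in>G. orthogonal_matrix Q) \<and> mat 1 \<in> G \<and>
     (\<forall>Q\<in>G. \<forall>R\<in>G. Q ** R \<in> G) \<and> (\<forall>Q\<in>G. transpose Q \<in> G)"

definition orbit :: "(real^'p^'p) set \<Rightarrow> real^'p \<Rightarrow> (real^'p) set" where
  "orbit G x = (\<lambda>Q. Q *v x) ` G"

definition gcost :: "(real^'p^'p) set \<Rightarrow> real^'p \<Rightarrow> real^'p \<Rightarrow> real" where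
  "gcost G x h = (INF Q\<in>G. (norm (transpose Q *v x - h))\<^sup>2)"

definition optimal_perm ::
  "(real^'p^'p) set \<Rightarrow> nat \<Rightarrow> (nat \<Rightarrow> real^'p) \<Rightarrow> (nat \<Rightarrow> real^'p) \<Rightarrow> (nat \<Rightarrow> nat) \<Rightarrow> bool" where
  "optimal_perm G n X h \<sigma> \<longleftrightarrow> \<sigma> permutes {..<n} \<and>
     (\<forall>\<tau>. \<tau> permutes {..<n} \<longrightarrow>
        (\<Sum>i<n. gcost G (X (\<sigma> i)) (h i)) \<le> (\<Sum>i<n. gcost G (X (\<tau> i)) (h i)))"

definition has_lebesgue_density :: "(real^'p) measure \<Rightarrow> bool" where
  "has_lebesgue_density \<mu> \<longleftrightarrow> (\<exists>f\<in>borel_measurable lborel. \<mu> = density lborel f)"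

end

theory Submission
  imports Defs
begin



lemma countable_intervals:
  fixes T :: "real set" and a b :: "real \<Rightarrow> real"
  assumes ab: "\<And>t. t \<in> T \<Longrightarrow> a t < b t"
    and mono: "\<And>t s. t \<in> T \<Longrightarrow> s \<in> T \<Longrightarrow> t < s \<Longrightarrow> b t \<le> a s"
  shows "countable T"
proof -
  have "\<forall>t\<in>T. \<exists>q\<in>\<rat>. a t < q \<and> q < b t"
    using ab Rats_dense_in_real by blast
  then obtain q where q: "\<And>t. t \<in> T \<Longrightarrow> q t \<in> \<rat> \<and> a t < q t \<and> q t < b t"
    by metis
  have inj: "inj_on q T"
  proof (rule inj_onI, rule ccontr)
    fix t s assume ts: "t \<in> T" "s \<in> T" "q t = q s" "t \<noteq> s"
    show False
    proof (cases "t < s")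
      case True thus False using q[OF ts(1)] q[OF ts(2)] mono[OF ts(1,2)] ts(3) by force
    next
      case False hence "s < t" using ts(4) by auto
      thus False using q[OF ts(1)] q[OF ts(2)] mono[OF ts(2,1)] ts(3) by force
    qed
  qed
  have "q ` T \<subseteq> \<rat>" using q by auto
  hence "countable (q ` T)" using countable_rat countable_subset by blast
  thus ?thesis using countable_image_inj_on inj by blast
qed

lemma null_by_lines:
  fixes A :: "'a::euclidean_space set" and e :: 'a
  assumes A: "A \<in> sets borel"
    and cnt: "\<And>x. countable {t::real. x + t *\<^sub>R e \<in> A}"
  shows "A \<in> null_sets lborel"
proof -
  define F where "F = (\<lambda>(x::'a) (t::real). indicator A (x + t *\<^sub>R e) * indicator {0..1} t :: ennreal)"
  have meas: "case_prod F \<in> borel_measurable (lborel \<Otimes>\<^sub>M lborel)"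
    unfolding F_def using A by measurable
  have 1: "(\<integral>\<^sup>+ x. (\<integral>\<^sup>+ t. F x t \<partial>lborel) \<partial>lborel) = 0"
  proof -
    have "(\<integral>\<^sup>+ t. F x t \<partial>lborel) = 0" for x
    proof -
      have "{t. x + t *\<^sub>R e \<in> A} \<in> null_sets lborel"
        using cnt countable_imp_null_set_lborel by blast
      hence "AE t in lborel. t \<notin> {t. x + t *\<^sub>R e \<in> A}" by (rule AE_not_in)
      hence "AE t in lborel. F x t = 0" by eventually_elim (auto simp: F_def)
      thus ?thesis by (simp add: nn_integral_cong_AE)
    qed
    thus ?thesis by simp
  qed
  have trans: "(\<integral>\<^sup>+ x. indicator A (x + c) \<partial>lborel) = emeasure lborel A" for c :: 'a
  proof -
    have "(\<integral>\<^sup>+ x. indicator A (x + c) \<partial>lborel) = (\<integral>\<^sup>+ x. indicator A x \<partial>distr lborel borel ((+) c))"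
      using A by (subst nn_integral_distr) (auto simp: add.commute)
    also have "\<dots> = emeasure lborel A" using A by (simp add: lborel_distr_plus)
    finally show ?thesis .
  qed
  have 2: "(\<integral>\<^sup>+ t. (\<integral>\<^sup>+ x. F x t \<partial>lborel) \<partial>lborel) = emeasure lborel A"
  proof -
    have "(\<integral>\<^sup>+ x. F x t \<partial>lborel) = emeasure lborel A * indicator {0..1} t" for t :: real
      unfolding F_def using A by (simp add: nn_integral_multc trans)
    hence "(\<integral>\<^sup>+ t. (\<integral>\<^sup>+ x. F x t \<partial>lborel) \<partial>lborel) = (\<integral>\<^sup>+ (t::real). emeasure lborel A * indicator {0..1} t \<partial>lborel)"
      by simp
    also have "\<dots> = emeasure lborel A"
      by (simp add: nn_integral_cmult_indicator)
    finally show ?thesis .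
  qed
  have "emeasure lborel A = 0"
    using lborel_pair.Fubini'[OF meas] 1 2 by simp
  thus ?thesis using A by auto
qed




definition badset :: "'a::euclidean_space set \<Rightarrow> 'a set \<Rightarrow> real \<Rightarrow> 'a \<Rightarrow> real \<Rightarrow> 'a set" where
  "badset Sa Sb c e \<epsilon> = {x. \<exists>ya\<in>Sa. \<exists>yb\<in>Sb. (\<forall>z\<in>Sa. x \<bullet> z \<le> x \<bullet> ya) \<and> (\<forall>z\<in>Sb. x \<bullet> z \<le> x \<bullet> yb)
      \<and> x \<bullet> ya - x \<bullet> yb = c \<and> e \<bullet> ya + \<epsilon> \<le> e \<bullet> yb}"

lemma badset_closed:
  assumes "compact Sa" "compact Sb"
  shows "closed (badset Sa Sb c e \<epsilon>)"
proof -
  define T where "T = {(p::'a\<times>'a, x::'a). (\<forall>z\<in>Sa. x \<bullet> z \<le> x \<bullet> fst p) \<and> (\<forall>z\<in>Sb. x \<bullet> z \<le> x \<bullet> snd p)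
      \<and> x \<bullet> fst p - x \<bullet> snd p = c \<and> e \<bullet> fst p + \<epsilon> \<le> e \<bullet> snd p}"
  have eq: "badset Sa Sb c e \<epsilon> = {x. \<exists>p. p \<in> Sa \<times> Sb \<and> (p, x) \<in> T}"
    unfolding badset_def T_def by auto
  have T: "T = (\<Inter>z\<in>Sa. {q. snd q \<bullet> z \<le> snd q \<bullet> fst (fst q)}) \<inter> (\<Inter>z\<in>Sb. {q. snd q \<bullet> z \<le> snd q \<bullet> snd (fst q)})
     \<inter> {q. snd q \<bullet> fst (fst q) - snd q \<bullet> snd (fst q) = c} \<inter> {q. e \<bullet> fst (fst q) + \<epsilon> \<le> e \<bullet> snd (fst q)}"
    unfolding T_def by auto
  have "closed T"
    unfolding T
    by (intro closed_Int closed_INT ballI closed_Collect_le closed_Collect_eq continuous_intros)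
  moreover have "compact (Sa \<times> Sb)" using assms by (simp add: compact_Times)
  ultimately show ?thesis unfolding eq by (rule closed_compact_projection[rotated])
qed

lemma badset_line_countable:
  assumes "\<epsilon> > 0"
  shows "countable {t::real. x + t *\<^sub>R e \<in> badset Sa Sb c e \<epsilon>}"
proof -
  define T where "T = {t::real. x + t *\<^sub>R e \<in> badset Sa Sb c e \<epsilon>}"
  have "\<forall>t\<in>T. \<exists>ya yb. ya\<in>Sa \<and> yb\<in>Sb \<and> (\<forall>z\<in>Sa. (x + t *\<^sub>R e) \<bullet> z \<le> (x + t *\<^sub>R e) \<bullet> ya)
      \<and> (\<forall>z\<in>Sb. (x + t *\<^sub>R e) \<bullet> z \<le> (x + t *\<^sub>R e) \<bullet> yb)
      \<and> (x + t *\<^sub>R e) \<bullet> ya - (x + t *\<^sub>R e) \<bullet> yb = c \<and> e \<bullet> ya + \<epsilon> \<le> e \<bullet> yb"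
    unfolding T_def badset_def by blast
  then obtain ya yb where Y: "\<And>t. t \<in> T \<Longrightarrow> ya t\<in>Sa \<and> yb t\<in>Sb \<and> (\<forall>z\<in>Sa. (x + t *\<^sub>R e) \<bullet> z \<le> (x + t *\<^sub>R e) \<bullet> ya t)
      \<and> (\<forall>z\<in>Sb. (x + t *\<^sub>R e) \<bullet> z \<le> (x + t *\<^sub>R e) \<bullet> yb t)
      \<and> (x + t *\<^sub>R e) \<bullet> ya t - (x + t *\<^sub>R e) \<bullet> yb t = c \<and> e \<bullet> ya t + \<epsilon> \<le> e \<bullet> yb t"
    by metis
  have "countable T"
  proof (rule countable_intervals[of T "\<lambda>t. e \<bullet> ya t" "\<lambda>t. e \<bullet> yb t"])
    fix t assume "t \<in> T" thus "e \<bullet> ya t < e \<bullet> yb t" using Y[of t] assms by auto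
  next
    fix t s assume ts: "t \<in> T" "s \<in> T" "t < s"
    note Yt = Y[OF ts(1)] and Ys = Y[OF ts(2)]
    have 1: "(x + s *\<^sub>R e) \<bullet> yb t \<le> (x + s *\<^sub>R e) \<bullet> yb s" using Yt Ys by blast
    have 2: "(x + t *\<^sub>R e) \<bullet> ya s \<le> (x + t *\<^sub>R e) \<bullet> ya t" using Yt Ys by blast
    have 3: "(x + t *\<^sub>R e) \<bullet> ya t - (x + t *\<^sub>R e) \<bullet> yb t = (x + s *\<^sub>R e) \<bullet> ya s - (x + s *\<^sub>R e) \<bullet> yb s"
      using Yt Ys by simp
    have "(s - t) * (e \<bullet> yb t) \<le> (s - t) * (e \<bullet> ya s)"
      using 1 2 3 by (simp add: inner_add_left algebra_simps)
    thus "e \<bullet> yb t \<le> e \<bullet> ya s" using ts(3) by simp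
  qed
  thus ?thesis unfolding T_def .
qed




definition bigbad :: "'a::euclidean_space set \<Rightarrow> 'a set \<Rightarrow> real \<Rightarrow> 'a set" where
  "bigbad Sa Sb c = (\<Union>b\<in>Basis. \<Union>m::nat. badset Sa Sb c b (1 / real (Suc m)) \<union> badset Sa Sb c (-b) (1 / real (Suc m)))"

lemma badset_null:
  assumes "compact Sa" "compact Sb" "\<epsilon> > 0"
  shows "badset Sa Sb c e \<epsilon> \<in> null_sets lborel"
proof (rule null_by_lines[where e=e])
  show "badset Sa Sb c e \<epsilon> \<in> sets borel" using badset_closed[OF assms(1,2)] by (rule borel_closed)
  show "countable {t. x + t *\<^sub>R e \<in> badset Sa Sb c e \<epsilon>}" for x using badset_line_countable[OF assms(3)] .
qed

lemma bigbad_null: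
  assumes "compact Sa" "compact Sb"
  shows "bigbad Sa Sb c \<in> null_sets lborel"
  unfolding bigbad_def
proof (intro null_sets_UN' null_sets_UN null_sets.Un badset_null)
  show "countable (Basis::'a set)" by (simp add: countable_finite)
qed (use assms in auto)

lemma bigbad_prop:
  assumes "x \<notin> bigbad Sa Sb c" "ya \<in> Sa" "yb \<in> Sb"
    "\<forall>z\<in>Sa. x \<bullet> z \<le> x \<bullet> ya" "\<forall>z\<in>Sb. x \<bullet> z \<le> x \<bullet> yb" "x \<bullet> ya - x \<bullet> yb = c"
  shows "ya = yb"
proof (rule ccontr)
  assume "ya \<noteq> yb"
  then obtain b where b: "b \<in> Basis" "ya \<bullet> b \<noteq> yb \<bullet> b" using euclidean_eqI by metis
  show False
  proof (cases "ya \<bullet> b < yb \<bullet> b")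
    case True
    then obtain m where m: "inverse (real (Suc m)) < yb \<bullet> b - ya \<bullet> b"
      using reals_Archimedean by (metis diff_gt_0_iff_gt)
    hence "x \<in> badset Sa Sb c b (1 / real (Suc m))"
      unfolding badset_def mem_Collect_eq
      apply (rule_tac bexI[where x=ya], rule_tac bexI[where x=yb])
      using assms(2-6) by (auto simp: inner_commute divide_inverse)
    thus False using assms(1) b(1) unfolding bigbad_def by blast
  next
    case False
    hence "yb \<bullet> b < ya \<bullet> b" using b(2) by auto
    then obtain m where m: "inverse (real (Suc m)) < ya \<bullet> b - yb \<bullet> b"
      using reals_Archimedean by (metis diff_gt_0_iff_gt)
    hence "x \<in> badset Sa Sb c (-b) (1 / real (Suc m))"
      unfolding badset_def mem_Collect_eq
      apply (rule_tac bexI[where x=ya], rule_tac bexI[where x=yb])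
      using assms(2-6) by (auto simp: inner_commute divide_inverse)
    thus False using assms(1) b(1) unfolding bigbad_def by blast
  qed
qed




lemma orth_norm: "orthogonal_matrix Q \<Longrightarrow> norm (Q *v x) = norm (x::real^'n)"
  by (metis (no_types, lifting) dot_matrix_vector_mul matrix_vector_mul_lid
    norm_eq orthogonal_matrix_def orthogonal_matrix_id)

lemma orth_dist: "orthogonal_matrix Q \<Longrightarrow> norm (transpose Q *v x - h) = dist x (Q *v (h::real^'n))"
proof -
  assume Q: "orthogonal_matrix Q"
  have "transpose Q *v x - h = transpose Q *v (x - Q *v h)"
    using Q by (simp add: matrix_vector_mult_diff_distrib matrix_vector_mul_assoc orthogonal_matrix_def)
  moreover have "orthogonal_matrix (transpose Q)" using Q by (simp add: orthogonal_matrix_transpose)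
  ultimately show ?thesis unfolding dist_norm by (simp only: orth_norm)
qed

lemma orth_dist': "orthogonal_matrix Q \<Longrightarrow> norm (x v* Q - h) = dist x (Q *v (h::real^'n))"
  using orth_dist[of Q x h] by simp

lemma cont_Qh: "continuous_on G (\<lambda>Q::real^'n^'n. Q *v h)"
  unfolding matrix_vector_mult_def by (intro continuous_intros)

lemma G_facts:
  assumes "compact_orth_subgroup G"
  shows "G \<noteq> {}" "compact G" "\<And>Q. Q \<in> G \<Longrightarrow> orthogonal_matrix Q"
  using assms unfolding compact_orth_subgroup_def by auto

lemma orbit_compact: "compact_orth_subgroup G \<Longrightarrow> compact (orbit G h)"
  unfolding orbit_def by (intro compact_continuous_image cont_Qh) (simp add: G_facts)

lemma orbit_ne: "compact_orth_subgroup G \<Longrightarrow> orbit G h \<noteq> {}"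
  unfolding orbit_def using G_facts by auto

lemma orbit_norm: "compact_orth_subgroup G \<Longrightarrow> y \<in> orbit G h \<Longrightarrow> norm y = norm h"
  unfolding orbit_def using G_facts(3) orth_norm by blast

lemma dist_sq: "(dist x y)\<^sup>2 = x \<bullet> x - 2 * (x \<bullet> y) + y \<bullet> (y::'a::real_inner)"
  by (simp add: dist_norm power2_norm_eq_inner inner_diff_left inner_diff_right inner_commute)

lemma max_exists:
  assumes "compact_orth_subgroup G"
  shows "\<exists>y\<in>orbit G h. \<forall>z\<in>orbit G h. x \<bullet> z \<le> x \<bullet> y"
proof -
  have "continuous_on (orbit G h) (\<lambda>y. x \<bullet> y)" by (intro continuous_intros)
  thus ?thesis using continuous_attains_sup[OF orbit_compact[OF assms] orbit_ne[OF assms], where f="\<lambda>y. x \<bullet> y"]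
    by blast
qed

lemma max_iff_nearest:
  assumes G: "compact_orth_subgroup G" and y: "y \<in> orbit G h" and z: "z \<in> orbit G h"
  shows "dist x y \<le> dist x z \<longleftrightarrow> x \<bullet> z \<le> x \<bullet> y"
proof -
  have "y \<bullet> y = z \<bullet> z" using orbit_norm[OF G y] orbit_norm[OF G z] by (metis power2_norm_eq_inner)
  hence "(dist x y)\<^sup>2 \<le> (dist x z)\<^sup>2 \<longleftrightarrow> x \<bullet> z \<le> x \<bullet> y" by (simp add: dist_sq)
  thus ?thesis by (simp add: power2_le_iff_abs_le)
qed

lemma gcost_eq:
  assumes G: "compact_orth_subgroup G" and y: "y \<in> orbit G h" and ymax: "\<forall>z\<in>orbit G h. x \<bullet> z \<le> x \<bullet> y"
  shows "gcost G x h = x \<bullet> x - 2 * (x \<bullet> y) + h \<bullet> h"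
proof -
  have "gcost G x h = (dist x y)\<^sup>2"
    unfolding gcost_def image_image[symmetric]
  proof (rule cInf_eq_minimum)
    obtain Q0 where Q0: "Q0 \<in> G" "y = Q0 *v h" using y unfolding orbit_def by auto
    show "(dist x y)\<^sup>2 \<in> (\<lambda>Q. (norm (transpose Q *v x - h))\<^sup>2) ` G"
    proof -
      have e: "norm (transpose Q0 *v x - h) = dist x y"
        using orth_dist[OF G_facts(3)[OF G Q0(1)]] Q0(2) by (simp only:)
      have "(\<lambda>Q. (norm (transpose Q *v x - h))\<^sup>2) Q0 \<in> (\<lambda>Q. (norm (transpose Q *v x - h))\<^sup>2) ` G"
        using Q0(1) by (rule imageI)
      thus ?thesis by (simp only: e)
    qed
  next
    fix r assume "r \<in> (\<lambda>Q. (norm (transpose Q *v x - h))\<^sup>2) ` G"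
    then obtain Q where Q0: "Q \<in> G" "r = (norm (transpose Q *v x - h))\<^sup>2" by blast
    have Q: "Q \<in> G" "r = (dist x (Q *v h))\<^sup>2" using Q0 orth_dist[OF G_facts(3)[OF G Q0(1)]] by (simp_all only:)
    have "Q *v h \<in> orbit G h" using Q unfolding orbit_def by auto
    hence "dist x y \<le> dist x (Q *v h)" using max_iff_nearest[OF G y] ymax by auto
    thus "(dist x y)\<^sup>2 \<le> r" using Q by (simp add: power_mono)
  qed
  also have "\<dots> = x \<bullet> x - 2 * (x \<bullet> y) + y \<bullet> y" by (rule dist_sq)
  also have "y \<bullet> y = h \<bullet> h" using orbit_norm[OF G y] by (metis power2_norm_eq_inner)
  finally show ?thesis .
qed




lemma AE_PiM_coord:
  assumes mu: "prob_space \<mu>" and I: "finite I" "k \<in> I"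
    and S: "S \<in> sets (PiM I (\<lambda>_. \<mu>))"
    and H: "\<And>X. X \<in> space (PiM (I - {k}) (\<lambda>_. \<mu>)) \<Longrightarrow> AE y in \<mu>. X(k := y) \<notin> S"
  shows "AE X in PiM I (\<lambda>_. \<mu>). X \<notin> S"
proof -
  interpret prob_space \<mu> by (rule mu)
  interpret P: product_sigma_finite "\<lambda>_. \<mu>"
    by (simp add: product_sigma_finite_def sigma_finite_measure_axioms)
  have Ieq: "I = insert k (I - {k})" using I by auto
  have "emeasure (PiM I (\<lambda>_. \<mu>)) S = (\<integral>\<^sup>+ X. indicator S X \<partial>PiM I (\<lambda>_. \<mu>))"
    using S by simp
  also have "\<dots> = (\<integral>\<^sup>+ X. indicator S X \<partial>PiM (insert k (I - {k})) (\<lambda>_. \<mu>))"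
    using Ieq by simp
  also have "\<dots> = (\<integral>\<^sup>+ X. (\<integral>\<^sup>+ y. indicator S (X(k := y)) \<partial>\<mu>) \<partial>PiM (I - {k}) (\<lambda>_. \<mu>))"
    using I S Ieq by (subst P.product_nn_integral_insert) auto
  also have "\<dots> = (\<integral>\<^sup>+ X. 0 \<partial>PiM (I - {k}) (\<lambda>_. \<mu>))"
  proof (rule nn_integral_cong)
    fix X assume "X \<in> space (PiM (I - {k}) (\<lambda>_. \<mu>))"
    hence "AE y in \<mu>. X(k := y) \<notin> S" by (rule H)
    hence "AE y in \<mu>. indicator S (X(k := y)) = (0::ennreal)" by eventually_elim auto
    thus "(\<integral>\<^sup>+ y. indicator S (X(k := y)) \<partial>\<mu>) = 0" by (simp add: nn_integral_cong_AE)
  qed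
  finally have "S \<in> null_sets (PiM I (\<lambda>_. \<mu>))" using S by auto
  thus ?thesis by (rule AE_not_in)
qed

lemma infdist_orbit:
  assumes G: "compact_orth_subgroup G" and y: "y \<in> orbit G h" and ymax: "\<forall>z\<in>orbit G h. x \<bullet> z \<le> x \<bullet> y"
  shows "infdist x (orbit G h) = dist x y"
  unfolding infdist_def using orbit_ne[OF G]
  by (auto intro!: cInf_eq_minimum simp: max_iff_nearest[OF G y] y ymax)

lemma gcost_infdist:
  assumes G: "compact_orth_subgroup G"
  shows "gcost G x h = (infdist x (orbit G h))\<^sup>2"
proof -
  obtain y where y: "y \<in> orbit G h" "\<forall>z\<in>orbit G h. x \<bullet> z \<le> x \<bullet> y" using max_exists[OF G] by blast
  have "gcost G x h = x \<bullet> x - 2 * (x \<bullet> y) + h \<bullet> h" by (rule gcost_eq[OF G y])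
  also have "h \<bullet> h = y \<bullet> y" using orbit_norm[OF G y(1)] by (metis power2_norm_eq_inner)
  also have "x \<bullet> x - 2 * (x \<bullet> y) + y \<bullet> y = (dist x y)\<^sup>2" by (simp add: dist_sq)
  also have "dist x y = infdist x (orbit G h)" using infdist_orbit[OF G y] by simp
  finally show ?thesis .
qed

lemma gcost_borel:
  assumes G: "compact_orth_subgroup G"
  shows "(\<lambda>x. gcost G x h) \<in> borel_measurable borel"
proof -
  have "continuous_on UNIV (\<lambda>x. (infdist x (orbit G h))\<^sup>2)" by (intro continuous_intros)
  hence "(\<lambda>x. (infdist x (orbit G h))\<^sup>2) \<in> borel_measurable borel" by (rule borel_measurable_continuous_onI)
  thus ?thesis by (simp add: gcost_infdist[OF G])
qed




lemma orbit_disjoint: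
  assumes G: "compact_orth_subgroup G" and hb: "h b \<notin> orbit G (h a)"
    and ya: "y \<in> orbit G (h a)" and yb: "y \<in> orbit G (h b)"
  shows False
proof -
  obtain Q1 where Q1: "Q1 \<in> G" "y = Q1 *v h a" using ya unfolding orbit_def by auto
  obtain Q2 where Q2: "Q2 \<in> G" "y = Q2 *v h b" using yb unfolding orbit_def by auto
  have o2: "orthogonal_matrix Q2" using G_facts(3)[OF G Q2(1)] .
  have "transpose Q2 ** Q1 \<in> G" using G Q1(1) Q2(1) unfolding compact_orth_subgroup_def by blast
  moreover have "(transpose Q2 ** Q1) *v h a = h b"
  proof -
    have "(transpose Q2 ** Q1) *v h a = transpose Q2 *v (Q2 *v h b)"
      using Q1(2) Q2(2) by (simp add: matrix_vector_mul_assoc[symmetric])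
    also have "\<dots> = h b" using o2 unfolding orthogonal_matrix_def
      by (simp add: matrix_vector_mul_assoc)
    finally show ?thesis .
  qed
  ultimately have "h b \<in> orbit G (h a)" unfolding orbit_def by force
  thus False using hb by simp
qed

lemma free_inj:
  assumes G: "compact_orth_subgroup G" and hB: "h \<in> B"
    and free: "\<forall>y\<in>B. \<forall>Q\<in>G. Q *v y = y \<longrightarrow> Q = mat 1"
    and Q1: "Q1 \<in> G" and Q2: "Q2 \<in> G" and eq: "Q1 *v h = Q2 *v h"
  shows "Q1 = Q2"
proof -
  have o2: "orthogonal_matrix Q2" using G_facts(3)[OF G Q2] .
  have inG: "transpose Q2 ** Q1 \<in> G" using G Q1 Q2 unfolding compact_orth_subgroup_def by blast
  have "(transpose Q2 ** Q1) *v h = h"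
  proof -
    have "(transpose Q2 ** Q1) *v h = transpose Q2 *v (Q2 *v h)"
      using eq by (simp add: matrix_vector_mul_assoc[symmetric])
    also have "\<dots> = h" using o2 unfolding orthogonal_matrix_def
      by (simp add: matrix_vector_mul_assoc)
    finally show ?thesis .
  qed
  hence "transpose Q2 ** Q1 = mat 1" using free hB inG by blast
  hence "Q2 ** (transpose Q2 ** Q1) = Q2" by simp
  thus ?thesis using o2 unfolding orthogonal_matrix_def by (simp add: matrix_mul_assoc)
qed

lemma cost_reindex:
  assumes "\<sigma> permutes {..<n}"
  shows "(\<Sum>i<n. F (\<sigma> i) i) = (\<Sum>k<n. F k (inv \<sigma> k))"
proof -
  have "(\<Sum>k<n. F k (inv \<sigma> k)) = (\<Sum>i<n. F (\<sigma> i) (inv \<sigma> (\<sigma> i)))"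
    using assms by (subst sum.reindex_bij_betw[symmetric, where h=\<sigma>]) (auto simp: permutes_imp_bij)
  also have "\<dots> = (\<Sum>i<n. F (\<sigma> i) i)" using assms by (simp add: permutes_inverses)
  finally show ?thesis by simp
qed

lemma perm_diff_point:
  assumes "\<alpha> permutes {..<n}" "\<beta> permutes {..<n}" "\<alpha> \<noteq> \<beta>"
  shows "\<exists>k<n. \<alpha> k \<noteq> \<beta> k"
proof (rule ccontr)
  assume "\<not> ?thesis"
  hence "\<alpha> x = \<beta> x" for x using assms(1,2) unfolding permutes_def by (cases "x < n") auto
  thus False using assms(3) by auto
qed




lemma unique_nearest:
  assumes G: "compact_orth_subgroup G" and nb: "x \<notin> bigbad (orbit G h) (orbit G h) 0"
  shows "\<exists>!y. y \<in> orbit G h \<and> (\<forall>z\<in>orbit G h. dist x y \<le> dist x z)"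
proof -
  obtain y where y: "y \<in> orbit G h" "\<forall>z\<in>orbit G h. x \<bullet> z \<le> x \<bullet> y" using max_exists[OF G] by blast
  show ?thesis
  proof (rule ex1I[of _ y])
    show "y \<in> orbit G h \<and> (\<forall>z\<in>orbit G h. dist x y \<le> dist x z)"
      using y max_iff_nearest[OF G y(1)] by blast
  next
    fix y' assume y': "y' \<in> orbit G h \<and> (\<forall>z\<in>orbit G h. dist x y' \<le> dist x z)"
    have m': "\<forall>z\<in>orbit G h. x \<bullet> z \<le> x \<bullet> y'" using y' max_iff_nearest[OF G] by blast
    have "x \<bullet> y \<le> x \<bullet> y'" using m' y(1) by blast
    moreover have "x \<bullet> y' \<le> x \<bullet> y" using y(2) y' by blast
    ultimately have "x \<bullet> y' - x \<bullet> y = 0" by simp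
    thus "y' = y" using bigbad_prop[OF nb _ y(1) m' y(2)] y' by blast
  qed
qed

lemma unique_Q:
  assumes G: "compact_orth_subgroup G" and nb: "x \<notin> bigbad (orbit G h) (orbit G h) 0"
    and hB: "h \<in> B" and free: "\<forall>y\<in>B. \<forall>Q\<in>G. Q *v y = y \<longrightarrow> Q = mat 1"
  shows "\<exists>!Q. Q \<in> G \<and> (\<forall>Q'\<in>G. norm (transpose Q *v x - h) \<le> norm (transpose Q' *v x - h))"
proof -
  obtain y where y: "y \<in> orbit G h" "\<forall>z\<in>orbit G h. dist x y \<le> dist x z"
    and yu: "\<And>y'. y' \<in> orbit G h \<Longrightarrow> (\<forall>z\<in>orbit G h. dist x y' \<le> dist x z) \<Longrightarrow> y' = y"
    using unique_nearest[OF G nb] by blast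
  obtain Q0 where Q0: "Q0 \<in> G" "y = Q0 *v h" using y(1) unfolding orbit_def by auto
  have od: "norm (transpose Q *v x - h) = dist x (Q *v h)" if "Q \<in> G" for Q
    using orth_dist[OF G_facts(3)[OF G that]] .
  show ?thesis
  proof (rule ex1I[of _ Q0])
    show "Q0 \<in> G \<and> (\<forall>Q'\<in>G. norm (transpose Q0 *v x - h) \<le> norm (transpose Q' *v x - h))"
    proof (intro conjI ballI)
      show "Q0 \<in> G" by fact
      fix Q' assume Q': "Q' \<in> G"
      have "Q' *v h \<in> orbit G h" using Q' unfolding orbit_def by auto
      hence "dist x (Q0 *v h) \<le> dist x (Q' *v h)" using y(2) Q0(2) by blast
      thus "norm (transpose Q0 *v x - h) \<le> norm (transpose Q' *v x - h)"
        by (simp only: od[OF Q0(1)] od[OF Q'])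
    qed
  next
    fix Q1 assume Q1: "Q1 \<in> G \<and> (\<forall>Q'\<in>G. norm (transpose Q1 *v x - h) \<le> norm (transpose Q' *v x - h))"
    have "\<forall>z\<in>orbit G h. dist x (Q1 *v h) \<le> dist x z"
    proof
      fix z assume "z \<in> orbit G h"
      then obtain Q' where Q': "Q' \<in> G" "z = Q' *v h" unfolding orbit_def by auto
      have "norm (transpose Q1 *v x - h) \<le> norm (transpose Q' *v x - h)" using Q1 Q'(1) by blast
      thus "dist x (Q1 *v h) \<le> dist x z" by (simp only: od[OF conjunct1[OF Q1]] od[OF Q'(1)] Q'(2))
    qed
    moreover have "Q1 *v h \<in> orbit G h" using Q1 unfolding orbit_def by auto
    ultimately have "Q1 *v h = Q0 *v h" using yu Q0(2) by blast
    thus "Q1 = Q0" using free_inj[OF G hB free] Q1 Q0(1) by blast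
  qed
qed




theorem mainTheorem1:
  fixes G :: "(real^'p^'p) set"
    and \<mu> :: "(real^'p) measure"
    and n :: nat
    and h :: "nat \<Rightarrow> real^'p"
  assumes G: "compact_orth_subgroup G"
    and mu_prob: "prob_space \<mu>"
    and mu_ac: "has_lebesgue_density \<mu>"
    and distinct_orbits: "\<forall>i<n. \<forall>j<n. i \<noteq> j \<longrightarrow> h j \<notin> orbit G (h i)"
  shows
    "(AE X in PiM {..<n} (\<lambda>_. \<mu>).
        (\<exists>!\<sigma>. optimal_perm G n X h \<sigma>) \<and>
        (\<forall>\<sigma>. optimal_perm G n X h \<sigma> \<longrightarrow>
           (\<forall>j<n. \<exists>!y. y \<in> orbit G (h j) \<and>
               (\<forall>z\<in>orbit G (h j). dist (X (\<sigma> j)) y \<le> dist (X (\<sigma> j)) z))))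
    \<and>
    (\<forall>B. (\<forall>j<n. h j \<in> B) \<longrightarrow>
        (\<forall>y\<in>B. \<forall>Q\<in>G. Q *v y = y \<longrightarrow> Q = mat 1) \<longrightarrow>
        (AE X in PiM {..<n} (\<lambda>_. \<mu>).
          (\<forall>\<sigma>. optimal_perm G n X h \<sigma> \<longrightarrow>
             (\<forall>j<n. \<exists>!Q. Q \<in> G \<and>
                (\<forall>Q'\<in>G. norm (transpose Q *v X (\<sigma> j) - h j)
                          \<le> norm (transpose Q' *v X (\<sigma> j) - h j))))))"
proof -
  obtain f where f: "f \<in> borel_measurable lborel" "\<mu> = density lborel f"
    using mu_ac unfolding has_lebesgue_density_def by blast
  have sets_mu: "sets \<mu> = sets borel" using f(2) by simp
  have nullT: "AE x in \<mu>. x \<notin> N" if "N \<in> null_sets lborel" for N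
  proof -
    have "AE x in lborel. x \<notin> N" using that by (rule AE_not_in)
    hence "AE x in lborel. 0 < f x \<longrightarrow> x \<notin> N" by auto
    thus ?thesis unfolding f(2) using f(1) by (subst AE_density) auto
  qed
  define M where "M = PiM {..<n} (\<lambda>_. \<mu>)"
  define Orb where "Orb = (\<lambda>j. orbit G (h j))"
  have Ocomp: "compact (Orb j)" for j unfolding Orb_def by (rule orbit_compact[OF G])
  have gmeas: "(\<lambda>X. gcost G (X i) hh) \<in> borel_measurable M" if "i < n" for i hh
  proof -
    have "(\<lambda>x. gcost G x hh) \<in> borel_measurable \<mu>"
      using gcost_borel[OF G] measurable_cong_sets[OF sets_mu refl] by blast
    moreover have "(\<lambda>X. X i) \<in> measurable M \<mu>" unfolding M_def using that by simp
    ultimately show ?thesis by (rule measurable_compose[rotated])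
  qed
  have E1: "AE X in M. \<forall>i\<in>{..<n}. \<forall>j\<in>{..<n}. X i \<notin> bigbad (Orb j) (Orb j) 0"
  proof -
    have "AE X in M. X i \<notin> bigbad (Orb j) (Orb j) 0" if i: "i \<in> {..<n}" and j: "j \<in> {..<n}" for i j
    proof -
      define S where "S = {X \<in> space M. X i \<in> bigbad (Orb j) (Orb j) 0}"
      have bb: "bigbad (Orb j) (Orb j) 0 \<in> null_sets lborel" by (rule bigbad_null[OF Ocomp Ocomp])
      hence bbs: "bigbad (Orb j) (Orb j) 0 \<in> sets \<mu>" unfolding sets_mu by (metis null_setsD2 sets_lborel)
      have Ssets: "S \<in> sets M"
      proof -
        have "(\<lambda>X. X i) \<in> measurable M \<mu>" unfolding M_def using i by (rule measurable_component_singleton)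
        from measurable_sets[OF this bbs] show ?thesis unfolding S_def by (simp only: vimage_def Int_def conj_commute mem_Collect_eq)
      qed
      have "AE X in M. X \<notin> S"
        unfolding M_def
      proof (rule AE_PiM_coord[OF mu_prob _ i])
        show "S \<in> sets (PiM {..<n} (\<lambda>_. \<mu>))" using Ssets unfolding M_def .
        fix X assume "X \<in> space (PiM ({..<n} - {i}) (\<lambda>_. \<mu>))"
        show "AE y in \<mu>. X(i := y) \<notin> S"
          using nullT[OF bb] by eventually_elim (simp add: S_def)
      qed (rule finite_lessThan)
      moreover have "AE X in M. X \<in> space M" by (rule AE_space)
      ultimately show "AE X in M. X i \<notin> bigbad (Orb j) (Orb j) 0"
        by eventually_elim (simp add: S_def)
    qed
    thus ?thesis by (simp add: AE_finite_all)
  qed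
  define P where "P = {\<sigma>. \<sigma> permutes {..<n}}"
  define cost where "cost = (\<lambda>(\<sigma>::nat\<Rightarrow>nat) (X::nat\<Rightarrow>real^'p). \<Sum>i<n. gcost G (X (\<sigma> i)) (h i))"
  have costm: "cost \<sigma> \<in> borel_measurable M" if "\<sigma> \<in> P" for \<sigma>
  proof -
    have "\<sigma> i < n" if "i < n" for i using \<open>\<sigma> \<in> P\<close> that unfolding P_def
      using permutes_in_image[of \<sigma> "{..<n}" i] by simp
    thus ?thesis unfolding cost_def by (intro borel_measurable_sum gmeas) auto
  qed
  have E2: "AE X in M. \<forall>\<sigma>\<in>P. \<forall>\<tau>\<in>P. \<sigma> \<noteq> \<tau> \<longrightarrow> cost \<sigma> X \<noteq> cost \<tau> X"
  proof -
    have "AE X in M. cost \<sigma> X \<noteq> cost \<tau> X" if st: "\<sigma> \<in> P" "\<tau> \<in> P" "\<sigma> \<noteq> \<tau>" for \<sigma> \<tau>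
    proof -
      define \<alpha> where "\<alpha> = inv \<sigma>"
      define \<beta> where "\<beta> = inv \<tau>"
      have sp: "\<sigma> permutes {..<n}" "\<tau> permutes {..<n}" using st unfolding P_def by auto
      have ab: "\<alpha> permutes {..<n}" "\<beta> permutes {..<n}" unfolding \<alpha>_def \<beta>_def using sp by (auto intro: permutes_inv)
      have "\<alpha> \<noteq> \<beta>"
      proof
        assume "\<alpha> = \<beta>"
        hence "inv \<alpha> = inv \<beta>" by simp
        thus False using st(3) sp unfolding \<alpha>_def \<beta>_def by (simp add: permutes_inv_inv)
      qed
      then obtain k where k: "k < n" "\<alpha> k \<noteq> \<beta> k" using perm_diff_point[OF ab] by blast
      define a where "a = \<alpha> k"
      define b where "b = \<beta> k"
      have abn: "a < n" "b < n" "a \<noteq> b" using k ab unfolding a_def b_def by (metis lessThan_iff permutes_in_image)+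
      have cst: "cost \<sigma> X = (\<Sum>i<n. gcost G (X i) (h (\<alpha> i)))"
           "cost \<tau> X = (\<Sum>i<n. gcost G (X i) (h (\<beta> i)))" for X
        unfolding cost_def \<alpha>_def \<beta>_def
        using cost_reindex[OF sp(1), of "\<lambda>i j. gcost G (X i) (h j)"]
              cost_reindex[OF sp(2), of "\<lambda>i j. gcost G (X i) (h j)"] by simp_all
      define S where "S = {X \<in> space M. cost \<sigma> X = cost \<tau> X}"
      have Ssets: "S \<in> sets M" unfolding S_def using costm[OF st(1)] costm[OF st(2)] by measurable
      have "AE X in M. X \<notin> S"
        unfolding M_def
      proof (rule AE_PiM_coord[OF mu_prob _ _])
        show "S \<in> sets (PiM {..<n} (\<lambda>_. \<mu>))" using Ssets unfolding M_def .
        show "k \<in> {..<n}" using k by simp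
        fix X' assume "X' \<in> space (PiM ({..<n} - {k}) (\<lambda>_. \<mu>))"
        define R where "R = (\<Sum>i\<in>{..<n} - {k}. gcost G (X' i) (h (\<alpha> i)) - gcost G (X' i) (h (\<beta> i)))"
        define c where "c = (h a \<bullet> h a - h b \<bullet> h b + R) / 2"
        have bb: "bigbad (Orb a) (Orb b) c \<in> null_sets lborel" by (rule bigbad_null[OF Ocomp Ocomp])
        show "AE y in \<mu>. X'(k := y) \<notin> S"
          using nullT[OF bb]
        proof eventually_elim
          fix y assume ynb: "y \<notin> bigbad (Orb a) (Orb b) c"
          show "X'(k := y) \<notin> S"
          proof
            assume "X'(k := y) \<in> S"
            hence eq: "cost \<sigma> (X'(k := y)) = cost \<tau> (X'(k := y))" unfolding S_def by simp
            define Y where "Y = X'(k := y)"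
            have "0 = cost \<sigma> Y - cost \<tau> Y" using eq unfolding Y_def by simp
            also have "\<dots> = (\<Sum>i<n. gcost G (Y i) (h (\<alpha> i)) - gcost G (Y i) (h (\<beta> i)))"
              unfolding cst by (simp add: sum_subtractf)
            also have "\<dots> = (gcost G (Y k) (h (\<alpha> k)) - gcost G (Y k) (h (\<beta> k)))
                 + (\<Sum>i\<in>{..<n} - {k}. gcost G (Y i) (h (\<alpha> i)) - gcost G (Y i) (h (\<beta> i)))"
              using k by (subst sum.remove[of _ k]) auto
            also have "(\<Sum>i\<in>{..<n} - {k}. gcost G (Y i) (h (\<alpha> i)) - gcost G (Y i) (h (\<beta> i))) = R"
              unfolding R_def Y_def by (intro sum.cong) auto
            finally have zero: "0 = gcost G y (h a) - gcost G y (h b) + R"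
              unfolding Y_def a_def b_def by simp
            obtain ya where ya: "ya \<in> Orb a" "\<forall>z\<in>Orb a. y \<bullet> z \<le> y \<bullet> ya"
              using max_exists[OF G] unfolding Orb_def by blast
            obtain yb where yb: "yb \<in> Orb b" "\<forall>z\<in>Orb b. y \<bullet> z \<le> y \<bullet> yb"
              using max_exists[OF G] unfolding Orb_def by blast
            have ga: "gcost G y (h a) = y \<bullet> y - 2 * (y \<bullet> ya) + h a \<bullet> h a"
              using gcost_eq[OF G] ya unfolding Orb_def by blast
            have gb: "gcost G y (h b) = y \<bullet> y - 2 * (y \<bullet> yb) + h b \<bullet> h b"
              using gcost_eq[OF G] yb unfolding Orb_def by blast
            have "y \<bullet> ya - y \<bullet> yb = c" using zero ga gb unfolding c_def by simp
            hence "ya = yb" using bigbad_prop[OF ynb ya(1) yb(1) ya(2) yb(2)] by simp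
            moreover have "h b \<notin> orbit G (h a)" using distinct_orbits[rule_format, OF abn(1) abn(2) abn(3)] .
            ultimately show False
              using orbit_disjoint[OF G, of h b a ya] ya(1) yb(1) unfolding Orb_def by simp
          qed
        qed
      qed (rule finite_lessThan)
      moreover have "AE X in M. X \<in> space M" by (rule AE_space)
      ultimately show ?thesis by eventually_elim (simp add: S_def)
    qed
    moreover have "finite P" unfolding P_def by (rule finite_permutations) simp
    ultimately show ?thesis by (simp add: AE_finite_all)
  qed
  have Pfin: "finite P" unfolding P_def by (rule finite_permutations) simp
  have Pne: "id \<in> P" unfolding P_def by (simp add: permutes_id)
  have optP: "optimal_perm G n X h \<sigma> \<longleftrightarrow> \<sigma> \<in> P \<and> (\<forall>\<tau>\<in>P. cost \<sigma> X \<le> cost \<tau> X)" for X \<sigma>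
    unfolding optimal_perm_def P_def cost_def by auto
  have P1: "AE X in M. (\<exists>!\<sigma>. optimal_perm G n X h \<sigma>) \<and>
        (\<forall>\<sigma>. optimal_perm G n X h \<sigma> \<longrightarrow>
           (\<forall>j<n. \<exists>!y. y \<in> orbit G (h j) \<and>
               (\<forall>z\<in>orbit G (h j). dist (X (\<sigma> j)) y \<le> dist (X (\<sigma> j)) z)))"
    using E1 E2
  proof eventually_elim
    case (elim X)
    have e1: "X i \<notin> bigbad (orbit G (h j)) (orbit G (h j)) 0" if "i < n" "j < n" for i j
      using elim(1) that unfolding Orb_def by auto
    define m where "m = Min ((\<lambda>\<sigma>. cost \<sigma> X) ` P)"
    have "m \<in> (\<lambda>\<sigma>. cost \<sigma> X) ` P" unfolding m_def using Pfin Pne by (intro Min_in) auto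
    then obtain \<sigma>0 where s0: "\<sigma>0 \<in> P" "cost \<sigma>0 X = m" by auto
    have "\<forall>\<tau>\<in>P. m \<le> cost \<tau> X" unfolding m_def using Pfin by auto
    hence opt0: "optimal_perm G n X h \<sigma>0" using s0 optP by simp
    have ex1: "\<exists>!\<sigma>. optimal_perm G n X h \<sigma>"
    proof (rule ex1I[of _ \<sigma>0])
      show "optimal_perm G n X h \<sigma>0" by (rule opt0)
      fix \<sigma> assume "optimal_perm G n X h \<sigma>"
      hence "\<sigma> \<in> P" "cost \<sigma> X = cost \<sigma>0 X" using opt0 optP[of X] s0(1) by (auto intro: antisym)
      thus "\<sigma> = \<sigma>0" using elim(2) s0(1) by blast
    qed
    have near: "\<forall>\<sigma>. optimal_perm G n X h \<sigma> \<longrightarrow>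
           (\<forall>j<n. \<exists>!y. y \<in> orbit G (h j) \<and>
               (\<forall>z\<in>orbit G (h j). dist (X (\<sigma> j)) y \<le> dist (X (\<sigma> j)) z))"
    proof (intro allI impI)
      fix \<sigma> j assume opt: "optimal_perm G n X h \<sigma>" and j: "j < n"
      have "\<sigma> permutes {..<n}" using opt unfolding optimal_perm_def by simp
      hence "\<sigma> j < n" using permutes_in_image[of \<sigma> "{..<n}" j] j by simp
      thus "\<exists>!y. y \<in> orbit G (h j) \<and> (\<forall>z\<in>orbit G (h j). dist (X (\<sigma> j)) y \<le> dist (X (\<sigma> j)) z)"
        using unique_nearest[OF G e1[OF _ j]] by blast
    qed
    show ?case using ex1 near by blast
  qed
  have P2: "\<forall>B. (\<forall>j<n. h j \<in> B) \<longrightarrow>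
        (\<forall>y\<in>B. \<forall>Q\<in>G. Q *v y = y \<longrightarrow> Q = mat 1) \<longrightarrow>
        (AE X in M.
          (\<forall>\<sigma>. optimal_perm G n X h \<sigma> \<longrightarrow>
             (\<forall>j<n. \<exists>!Q. Q \<in> G \<and>
                (\<forall>Q'\<in>G. norm (transpose Q *v X (\<sigma> j) - h j)
                          \<le> norm (transpose Q' *v X (\<sigma> j) - h j)))))"
  proof (intro allI impI)
    fix B assume hB: "\<forall>j<n. h j \<in> B" and free: "\<forall>y\<in>B. \<forall>Q\<in>G. Q *v y = y \<longrightarrow> Q = mat 1"
    show "AE X in M.
          (\<forall>\<sigma>. optimal_perm G n X h \<sigma> \<longrightarrow>
             (\<forall>j<n. \<exists>!Q. Q \<in> G \<and>
                (\<forall>Q'\<in>G. norm (transpose Q *v X (\<sigma> j) - h j)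
                          \<le> norm (transpose Q' *v X (\<sigma> j) - h j))))"
      using E1
    proof eventually_elim
      case (elim X)
      show ?case
      proof (intro allI impI)
        fix \<sigma> j assume opt: "optimal_perm G n X h \<sigma>" and j: "j < n"
        have "\<sigma> permutes {..<n}" using opt unfolding optimal_perm_def by simp
        hence "\<sigma> j < n" using permutes_in_image[of \<sigma> "{..<n}" j] j by simp
        hence nb: "X (\<sigma> j) \<notin> bigbad (orbit G (h j)) (orbit G (h j)) 0"
          using elim j unfolding Orb_def by auto
        show "\<exists>!Q. Q \<in> G \<and> (\<forall>Q'\<in>G. norm (transpose Q *v X (\<sigma> j) - h j)
                          \<le> norm (transpose Q' *v X (\<sigma> j) - h j))"
          using unique_Q[OF G nb _ free] hB j by blast
      qed
    qed
  qed
  show ?thesis using P1 P2 unfolding M_def by blast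
qed

end
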